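(* For any $\mu>-1$ and $0<x<2\pi$ the following identities (with $x$-independent right-hand sides) hold: \[ \Im\big(e^{ix\mu}L(x,\mu)\big)+\int_0^{x}\frac{\sin(\mu+\frac{1}{2})y}{2\sin \frac{y}{2}}\,dy=\frac{\pi}{2} \] and \[ \Re\big(e^{ix\mu}L(x,\mu)\big)-\int_x^\pi\frac{\cos(\mu+\frac{1}{2})y\,dy}{2\sin\frac{y}{2}} =\Re\big(e^{i\pi\mu}T(\pi,\mu)\big)=-\mathrm{S}_{\pi/2}(2\mu+1)\,\cos\pi\mu . \]
   Context: $L(x,\mu)=\sum_{k=1}^\infty \frac{e^{ikx}}{k+\mu}$, with real part the cosine FJ sum $T(x,\mu)=\sum_{k=1}^\infty\frac{\cos kx}{k+\mu}$. The special value $\mathrm{S}_{\pi/2}(\lambda)=2\sum_{k=1}^\infty \frac{(-1)^{k-1}}{2k-1+\lambda}=-T\left(\pi,\frac{\lambda-1}{2}\right)$ (equivalently the imaginary part of $2\sum_{k\ge1}\frac{e^{(2k-1)i\pi/2}}{2k-1+\lambda}$). *)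

theory Defs
  imports "HOL-Analysis.Analysis"
begin

definition FJ_L :: "real \<Rightarrow> real \<Rightarrow> complex" where
  "FJ_L x \<mu> = (\<Sum>k. exp (\<i> * of_real (real (Suc k) * x)) / of_real (real (Suc k) + \<mu>))"

definition FJ_T :: "real \<Rightarrow> real \<Rightarrow> real" where
  "FJ_T x \<mu> = (\<Sum>k. cos (real (Suc k) * x) / (real (Suc k) + \<mu>))"

text \<open>S_{pi/2}(lambda) = 2 sum_{k>=1} (-1)^(k-1)/(2k-1+lambda), reindexed from k = 0.\<close>
definition S_half_pi :: "real \<Rightarrow> real" where
  "S_half_pi lam = 2 * (\<Sum>k. (-1) ^ k / (2 * real k + 1 + lam))"

end

theory Submission
  imports Defs "HOL-Probability.Sinc_Integral"
begin

lemma RL_poly: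
  fixes p :: "real \<Rightarrow> real"
  assumes p: "polynomial_function p" and ab: "a \<le> b"
  shows "\<exists>C. \<forall>M>0. \<bar>integral {a..b} (\<lambda>y. p y * cos (M * y + \<theta>))\<bar> \<le> C / M"
proof -
  obtain p' where p': "polynomial_function p'" "\<And>x. (p has_vector_derivative (p' x)) (at x)"
    using has_vector_derivative_polynomial_function[OF p] by blast
  have cp': "continuous_on {a..b} p'" by (rule continuous_on_polymonial_function[OF p'(1)])
  have cp: "continuous_on {a..b} p" by (rule continuous_on_polymonial_function[OF p])
  obtain B where B: "\<And>y. y \<in> {a..b} \<Longrightarrow> \<bar>p' y\<bar> \<le> B"
    using compact_imp_bounded[OF compact_continuous_image[OF cp' compact_Icc]]
    unfolding bounded_iff by fastforce
  show ?thesis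
  proof (intro exI allI impI)
    fix M :: real assume M: "M > 0"
    define P where "P y = p y * sin (M * y + \<theta>) / M" for y
    have der: "(P has_vector_derivative (p' y * sin (M * y + \<theta>) / M + p y * cos (M * y + \<theta>))) (at y within {a..b})" for y
    proof -
      have "(p has_real_derivative p' y) (at y)" using p'(2) has_real_derivative_iff_has_vector_derivative by blast
      then have "(P has_real_derivative (p' y * sin (M * y + \<theta>) / M + p y * cos (M * y + \<theta>))) (at y)"
        unfolding P_def using M by (auto intro!: derivative_eq_intros simp: field_simps)
      then show ?thesis using M
        by (simp add: has_real_derivative_iff_has_vector_derivative[symmetric] has_field_derivative_at_within)
    qed
    have I1: "((\<lambda>y. p' y * sin (M * y + \<theta>) / M + p y * cos (M * y + \<theta>)) has_integral (P b - P a)) {a..b}"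
      by (rule fundamental_theorem_of_calculus[OF ab der])
    have c1: "continuous_on {a..b} (\<lambda>y. p' y * sin (M * y + \<theta>) / M)"
      using cp' M by (auto intro!: continuous_intros)
    have I2: "((\<lambda>y. p' y * sin (M * y + \<theta>) / M) has_integral integral {a..b} (\<lambda>y. p' y * sin (M * y + \<theta>) / M)) {a..b}"
      by (rule integrable_integral[OF integrable_continuous_interval[OF c1]])
    have "((\<lambda>y. p y * cos (M * y + \<theta>)) has_integral (P b - P a - integral {a..b} (\<lambda>y. p' y * sin (M * y + \<theta>) / M))) {a..b}"
      using has_integral_diff[OF I1 I2] by simp
    then have eq: "integral {a..b} (\<lambda>y. p y * cos (M * y + \<theta>)) = P b - P a - integral {a..b} (\<lambda>y. p' y * sin (M * y + \<theta>) / M)"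
      by (rule integral_unique)
    have bd: "norm (integral {a..b} (\<lambda>y. p' y * sin (M * y + \<theta>) / M)) \<le> (B / M) * (b - a)"
    proof (rule integral_bound[OF ab c1])
      fix t assume t: "t \<in> {a..b}"
      have "\<bar>p' t * sin (M * t + \<theta>)\<bar> \<le> B * 1"
        unfolding abs_mult using B[OF t] by (intro mult_mono) auto
      then show "norm (p' t * sin (M * t + \<theta>) / M) \<le> B / M" using M by (simp add: divide_right_mono)
    qed
    have "\<bar>P b\<bar> \<le> \<bar>p b\<bar> / M" unfolding P_def using M
      by (simp add: abs_mult divide_right_mono mult_left_le)
    moreover have "\<bar>P a\<bar> \<le> \<bar>p a\<bar> / M" unfolding P_def using M
      by (simp add: abs_mult divide_right_mono mult_left_le)
    ultimately have "\<bar>integral {a..b} (\<lambda>y. p y * cos (M * y + \<theta>))\<bar> \<le> \<bar>p b\<bar> / M + \<bar>p a\<bar> / M + (B / M) * (b - a)"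
    proof -
      have bd2: "\<bar>integral {a..b} (\<lambda>y. p' y * sin (M * y + \<theta>) / M)\<bar> \<le> (B / M) * (b - a)"
        using bd by (simp only: real_norm_def)
      show ?thesis using eq bd2 \<open>\<bar>P b\<bar> \<le> \<bar>p b\<bar> / M\<close> \<open>\<bar>P a\<bar> \<le> \<bar>p a\<bar> / M\<close>
        by (smt (verit))
    qed
    also have "\<dots> = (\<bar>p b\<bar> + \<bar>p a\<bar> + B * (b - a)) / M" by (simp add: add_divide_distrib)
    finally show "\<bar>integral {a..b} (\<lambda>y. p y * cos (M * y + \<theta>))\<bar> \<le> (\<bar>p b\<bar> + \<bar>p a\<bar> + B * (b - a)) / M" .
  qed
qed

lemma RL:
  fixes f :: "real \<Rightarrow> real"
  assumes cf: "continuous_on {a..b} f" and ab: "a \<le> b"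
  shows "(\<lambda>N. integral {a..b} (\<lambda>y. f y * cos ((real N + 1/2) * y + \<theta>))) \<longlonglongrightarrow> 0"
proof (rule LIMSEQ_I)
  fix r :: real assume r: "r > 0"
  define e where "e = r / (2 * (b - a + 1))"
  have e: "e > 0" using r ab by (simp add: e_def)
  obtain p where p: "polynomial_function p" "\<And>y. y \<in> {a..b} \<Longrightarrow> norm (f y - p y) < e"
    using Stone_Weierstrass_polynomial_function[OF compact_Icc cf e] by blast
  obtain C where C: "\<And>M. M > 0 \<Longrightarrow> \<bar>integral {a..b} (\<lambda>y. p y * cos (M * y + \<theta>))\<bar> \<le> C / M"
    using RL_poly[OF p(1) ab, of \<theta>] by blast
  have C0: "C \<ge> 0" using C[of 1] by simp
  obtain n0 :: nat where n0: "2 * C / r < real n0" using reals_Archimedean2 by blast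
  have cp: "continuous_on {a..b} p" by (rule continuous_on_polymonial_function[OF p(1)])
  show "\<exists>no. \<forall>n\<ge>no. norm (integral {a..b} (\<lambda>y. f y * cos ((real n + 1/2) * y + \<theta>)) - 0) < r"
  proof (intro exI allI impI)
    fix n assume n: "n \<ge> n0"
    define M where "M = real n + 1/2"
    have M: "M > 0" by (simp add: M_def)
    have c1: "continuous_on {a..b} (\<lambda>y. (f y - p y) * cos (M * y + \<theta>))"
      using cf cp by (auto intro!: continuous_intros)
    have c2: "continuous_on {a..b} (\<lambda>y. p y * cos (M * y + \<theta>))"
      using cp by (auto intro!: continuous_intros)
    have split: "integral {a..b} (\<lambda>y. f y * cos (M * y + \<theta>)) =
        integral {a..b} (\<lambda>y. (f y - p y) * cos (M * y + \<theta>)) + integral {a..b} (\<lambda>y. p y * cos (M * y + \<theta>))"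
      using integral_add[OF integrable_continuous_interval[OF c1] integrable_continuous_interval[OF c2]]
      by (simp add: algebra_simps)
    have b1: "norm (integral {a..b} (\<lambda>y. (f y - p y) * cos (M * y + \<theta>))) \<le> e * (b - a)"
    proof (rule integral_bound[OF ab c1])
      fix t assume t: "t \<in> {a..b}"
      have "\<bar>(f t - p t) * cos (M * t + \<theta>)\<bar> \<le> e * 1"
        unfolding abs_mult using p(2)[OF t] by (intro mult_mono) auto
      then show "norm ((f t - p t) * cos (M * t + \<theta>)) \<le> e" by simp
    qed
    have "e * (b - a) < r / 2" using r ab unfolding e_def by (simp add: field_simps)
    with b1 have b1': "\<bar>integral {a..b} (\<lambda>y. (f y - p y) * cos (M * y + \<theta>))\<bar> < r / 2" by simp
    have "C / M \<le> C / real n0"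
    proof -
      have "0 < real n0" using n0 C0 r by (smt (verit) divide_nonneg_pos)
      moreover have "real n0 \<le> M" using n unfolding M_def by simp
      ultimately show ?thesis using C0 by (intro divide_left_mono) auto
    qed
    also have "C / real n0 \<le> r / 2"
      using n0 r C0 by (cases "n0 = 0") (auto simp: field_simps)
    finally have b2: "\<bar>integral {a..b} (\<lambda>y. p y * cos (M * y + \<theta>))\<bar> \<le> r / 2" using C[OF M] by linarith
    show "norm (integral {a..b} (\<lambda>y. f y * cos ((real n + 1/2) * y + \<theta>)) - 0) < r"
      using split b1' b2 unfolding M_def[symmetric] by simp
  qed
qed

lemma RL_sin:
  fixes f :: "real \<Rightarrow> real"
  assumes cf: "continuous_on {a..b} f" and ab: "a \<le> b"
  shows "(\<lambda>N. integral {a..b} (\<lambda>y. f y * sin ((real N + 1/2) * y))) \<longlonglongrightarrow> 0"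
proof -
  have "sin z = cos (z + - (pi/2))" for z by (simp add: cos_diff)
  then show ?thesis using RL[OF cf ab, of "- (pi/2)"] by (simp del: minus_divide_left)
qed

lemma sum_cos_id:
  fixes y \<phi> :: real
  shows "2 * sin (y/2) * (\<Sum>k<N. cos ((real k + 1) * y + \<phi>)) = sin ((real N + 1/2) * y + \<phi>) - sin (y/2 + \<phi>)"
proof (induction N)
  case 0 then show ?case by simp
next
  case (Suc N)
  define t where "t = (real N + 1) * y + \<phi>"
  have e1: "(real (Suc N) + 1/2) * y + \<phi> = t + y/2" by (simp add: t_def algebra_simps)
  have e2: "(real N + 1/2) * y + \<phi> = t - y/2" by (simp add: t_def algebra_simps)
  have I: "2 * sin (y/2) * cos t = sin (t + y/2) - sin (t - y/2)"
    by (simp add: sin_add sin_diff)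
  have "2 * sin (y/2) * (\<Sum>k<Suc N. cos ((real k + 1) * y + \<phi>)) = 2 * sin (y/2) * (\<Sum>k<N. cos ((real k + 1) * y + \<phi>)) + 2 * sin (y/2) * cos t"
    by (simp add: distrib_left t_def)
  also have "\<dots> = (sin ((real N + 1/2) * y + \<phi>) - sin (y/2 + \<phi>)) + (sin (t + y/2) - sin (t - y/2))"
    using Suc I by simp
  finally show ?case unfolding e1 e2 by simp
qed

lemma sum_sin_id:
  fixes y \<phi> :: real
  shows "2 * sin (y/2) * (\<Sum>k<N. sin ((real k + 1) * y + \<phi>)) = cos (y/2 + \<phi>) - cos ((real N + 1/2) * y + \<phi>)"
proof (induction N)
  case 0 then show ?case by simp
next
  case (Suc N)
  define t where "t = (real N + 1) * y + \<phi>"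
  have e1: "(real (Suc N) + 1/2) * y + \<phi> = t + y/2" by (simp add: t_def algebra_simps)
  have e2: "(real N + 1/2) * y + \<phi> = t - y/2" by (simp add: t_def algebra_simps)
  have I: "2 * sin (y/2) * sin t = cos (t - y/2) - cos (t + y/2)"
    by (simp add: cos_add cos_diff)
  have "2 * sin (y/2) * (\<Sum>k<Suc N. sin ((real k + 1) * y + \<phi>)) = 2 * sin (y/2) * (\<Sum>k<N. sin ((real k + 1) * y + \<phi>)) + 2 * sin (y/2) * sin t"
    by (simp add: distrib_left t_def)
  also have "\<dots> = (cos (y/2 + \<phi>) - cos ((real N + 1/2) * y + \<phi>)) + (cos (t - y/2) - cos (t + y/2))"
    using Suc I by simp
  finally show ?case unfolding e1 e2 by simp
qed

definition snc :: "real \<Rightarrow> real" where "snc x = (if x = 0 then 1 else sin x / x)"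

lemma isCont_snc: "isCont snc x"
  using isCont_sinc[of x] unfolding snc_def[abs_def] .

lemma continuous_on_snc[continuous_intros]:
  "continuous_on S f \<Longrightarrow> continuous_on S (\<lambda>x. snc (f x))"
  using continuous_on_compose[of S f snc, OF _ continuous_at_imp_continuous_on]
  by (auto simp: isCont_snc o_def)

lemma mult_snc: "x * snc x = sin x"
  by (simp add: snc_def)

lemma snc_half_nz: "0 \<le> y \<Longrightarrow> y < 2 * pi \<Longrightarrow> snc (y/2) \<noteq> 0"
  using sin_gt_zero[of "y/2"] by (auto simp: snc_def)

definition qf :: "real \<Rightarrow> real \<Rightarrow> real" where
  "qf \<mu> y = \<mu> * snc (\<mu> * y) / snc (y/2)"
definition rf :: "real \<Rightarrow> real \<Rightarrow> real" where
  "rf \<mu> y = - (\<mu>^2 * y / 2) * (snc (\<mu> * y / 2))^2 / snc (y/2)"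
definition gsf :: "real \<Rightarrow> real \<Rightarrow> real" where
  "gsf \<mu> y = cos (\<mu> * y) / 2 + qf \<mu> y * cos (y/2)"

lemma two_sin_half: "2 * sin (y/2) = y * snc (y/2)"
  using mult_snc[of "y/2"] by simp

lemma qf_id: assumes "0 \<le> y" "y < 2 * pi" shows "qf \<mu> y * (2 * sin (y/2)) = sin (\<mu> * y)"
proof -
  have "qf \<mu> y * (2 * sin (y/2)) = (\<mu> * y) * snc (\<mu> * y)"
    unfolding qf_def two_sin_half using snc_half_nz[OF assms] by (simp add: field_simps)
  then show ?thesis by (simp add: mult_snc)
qed

lemma rf_id: assumes "0 \<le> y" "y < 2 * pi" shows "rf \<mu> y * (2 * sin (y/2)) = cos (\<mu> * y) - 1"
proof -
  have "rf \<mu> y * (2 * sin (y/2)) = - 2 * ((\<mu> * y / 2) * snc (\<mu> * y / 2))^2"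
    unfolding rf_def two_sin_half using snc_half_nz[OF assms] by (simp add: field_simps power2_eq_square)
  also have "\<dots> = - 2 * (sin (\<mu> * y / 2))^2" by (simp add: mult_snc)
  also have "\<dots> = cos (\<mu> * y) - 1"
    using cos_double_sin[of "\<mu> * y / 2"] by simp
  finally show ?thesis .
qed

lemma gsf_id: assumes "0 \<le> y" "y < 2 * pi" shows "gsf \<mu> y * (2 * sin (y/2)) = sin ((\<mu> + 1/2) * y)"
proof -
  have "gsf \<mu> y * (2 * sin (y/2)) = cos (\<mu> * y) * sin (y/2) + (qf \<mu> y * (2 * sin (y/2))) * cos (y/2)"
    unfolding gsf_def by (simp add: algebra_simps)
  also have "\<dots> = sin (\<mu> * y + y/2)" using qf_id[OF assms] by (simp add: sin_add)
  finally show ?thesis by (simp add: algebra_simps)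
qed

lemma cont_qf: "b < 2 * pi \<Longrightarrow> continuous_on {0..b} (qf \<mu>)"
  unfolding qf_def[abs_def] using snc_half_nz by (auto intro!: continuous_intros)
lemma cont_rf: "b < 2 * pi \<Longrightarrow> continuous_on {0..b} (rf \<mu>)"
  unfolding rf_def[abs_def] using snc_half_nz by (auto intro!: continuous_intros)
lemma cont_gsf: "b < 2 * pi \<Longrightarrow> continuous_on {0..b} (gsf \<mu>)"
  unfolding gsf_def[abs_def] using cont_qf by (auto intro!: continuous_intros)

lemma ftc_real:
  assumes "u \<le> v" "\<And>y. (F has_real_derivative f y) (at y)"
  shows "(f has_integral (F v - F u)) {u..v}"
proof (rule fundamental_theorem_of_calculus[OF assms(1)])
  fix y assume "y \<in> {u..v}"
  have "(F has_real_derivative f y) (at y within {u..v})"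
    using assms(2) by (rule has_field_derivative_at_within)
  then show "(F has_vector_derivative f y) (at y within {u..v})"
    by (simp add: has_real_derivative_iff_has_vector_derivative)
qed

lemma deriv_sin_div: "c \<noteq> 0 \<Longrightarrow> ((\<lambda>y. sin (c * y) / c) has_real_derivative cos (c * y)) (at y)"
proof -
  assume c: "c \<noteq> 0"
  have "((\<lambda>y. sin (c * y)) has_real_derivative cos (c * y) * c) (at y)"
    by (auto intro!: derivative_eq_intros)
  from DERIV_cdivide[OF this, of c] c show ?thesis by simp
qed

lemma deriv_cos_div: "c \<noteq> 0 \<Longrightarrow> ((\<lambda>y. cos (c * y) / c) has_real_derivative - sin (c * y)) (at y)"
proof -
  assume c: "c \<noteq> 0"
  have "((\<lambda>y. cos (c * y)) has_real_derivative - sin (c * y) * c) (at y)"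
    by (auto intro!: derivative_eq_intros)
  from DERIV_cdivide[OF this, of c] c show ?thesis by simp
qed

definition Ef :: "nat \<Rightarrow> real \<Rightarrow> real" where
  "Ef N y = y / 2 + (\<Sum>k<N. sin ((real k + 1) * y) / (real k + 1))"
definition Df :: "nat \<Rightarrow> real \<Rightarrow> real" where
  "Df N y = 1 / 2 + (\<Sum>k<N. cos ((real k + 1) * y))"

lemma Ef_deriv: "(Ef N has_real_derivative Df N y) (at y)"
proof -
  have "((\<lambda>y. sin ((real k + 1) * y) / (real k + 1)) has_real_derivative cos ((real k + 1) * y)) (at y)" for k
  proof -
    have "real k + 1 \<noteq> 0" by simp
    then show ?thesis by (rule deriv_sin_div)
  qed
  then show ?thesis unfolding Ef_def[abs_def] Df_def
    by (auto intro!: derivative_eq_intros DERIV_sum)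
qed

lemma Df_id: assumes "sin (y/2) \<noteq> 0" shows "Df N y = sin ((real N + 1/2) * y) / (2 * sin (y/2))"
proof -
  have "2 * sin (y/2) * (\<Sum>k<N. cos ((real k + 1) * y + 0)) = sin ((real N + 1/2) * y + 0) - sin (y/2 + 0)"
    by (rule sum_cos_id)
  then show ?thesis using assms unfolding Df_def by (simp add: field_simps)
qed

lemma sin_half_pos: "0 < y \<Longrightarrow> y < 2 * pi \<Longrightarrow> sin (y/2) > 0"
  by (rule sin_gt_zero) auto

lemma E_lim:
  assumes "0 < u" "u \<le> v" "v < 2 * pi"
  shows "(\<lambda>N. Ef N v - Ef N u) \<longlonglongrightarrow> 0"
proof -
  have pos: "y \<in> {u..v} \<Longrightarrow> sin (y/2) > 0" for y using sin_half_pos[of y] assms by auto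
  have cw: "continuous_on {u..v} (\<lambda>y. 1 / (2 * sin (y/2)))"
    using pos by (intro continuous_intros) force+
  have "Ef N v - Ef N u = integral {u..v} (\<lambda>y. 1 / (2 * sin (y/2)) * sin ((real N + 1/2) * y))" for N
  proof -
    have "(Df N has_integral (Ef N v - Ef N u)) {u..v}"
      by (rule ftc_real[OF assms(2) Ef_deriv])
    then have "Ef N v - Ef N u = integral {u..v} (Df N)" by (simp add: integral_unique)
    also have "\<dots> = integral {u..v} (\<lambda>y. 1 / (2 * sin (y/2)) * sin ((real N + 1/2) * y))"
    proof (rule integral_cong)
      fix y assume "y \<in> {u..v}"
      then have "sin (y/2) \<noteq> 0" using pos by force
      then show "Df N y = 1 / (2 * sin (y/2)) * sin ((real N + 1/2) * y)" by (simp add: Df_id)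
    qed
    finally show ?thesis .
  qed
  then show ?thesis using RL_sin[OF cw assms(2)] by simp
qed

definition Ims :: "real \<Rightarrow> nat \<Rightarrow> real \<Rightarrow> real" where
  "Ims \<mu> N y = (\<Sum>k<N. sin ((real k + 1 + \<mu>) * y) / (real k + 1 + \<mu>))"
definition Res :: "real \<Rightarrow> nat \<Rightarrow> real \<Rightarrow> real" where
  "Res \<mu> N y = (\<Sum>k<N. cos ((real k + 1 + \<mu>) * y) / (real k + 1 + \<mu>))"

lemma Ims_deriv: assumes "\<mu> > -1"
  shows "(Ims \<mu> N has_real_derivative (\<Sum>k<N. cos ((real k + 1 + \<mu>) * y))) (at y)"
proof -
  have "((\<lambda>y. sin ((real k + 1 + \<mu>) * y) / (real k + 1 + \<mu>)) has_real_derivative cos ((real k + 1 + \<mu>) * y)) (at y)" for k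
  proof -
    have "real k + 1 + \<mu> \<noteq> 0" using assms by linarith
    then show ?thesis by (rule deriv_sin_div)
  qed
  then show ?thesis unfolding Ims_def[abs_def]
    by (rule DERIV_sum)
qed

lemma Res_deriv: assumes "\<mu> > -1"
  shows "(Res \<mu> N has_real_derivative (\<Sum>k<N. - sin ((real k + 1 + \<mu>) * y))) (at y)"
proof -
  have "((\<lambda>y. cos ((real k + 1 + \<mu>) * y) / (real k + 1 + \<mu>)) has_real_derivative - sin ((real k + 1 + \<mu>) * y)) (at y)" for k
  proof -
    have "real k + 1 + \<mu> \<noteq> 0" using assms by linarith
    then show ?thesis by (rule deriv_cos_div)
  qed
  then show ?thesis unfolding Res_def[abs_def]
    by (rule DERIV_sum)
qed

lemma cos_sum_decomp:
  assumes "0 < y" "y < 2 * pi"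
  shows "(\<Sum>k<N. cos ((real k + 1 + \<mu>) * y)) =
    Df N y + rf \<mu> y * sin ((real N + 1/2) * y) + qf \<mu> y * cos ((real N + 1/2) * y) - gsf \<mu> y"
proof -
  have s: "sin (y/2) > 0" using sin_half_pos assms by auto
  have "2 * sin (y/2) * (\<Sum>k<N. cos ((real k + 1 + \<mu>) * y)) = 2 * sin (y/2) * (\<Sum>k<N. cos ((real k + 1) * y + \<mu> * y))"
    by (simp add: algebra_simps)
  also have "\<dots> = sin ((real N + 1/2) * y + \<mu> * y) - sin (y/2 + \<mu> * y)" by (rule sum_cos_id)
  also have "\<dots> = sin ((real N + 1/2) * y) + (cos (\<mu> * y) - 1) * sin ((real N + 1/2) * y) + sin (\<mu> * y) * cos ((real N + 1/2) * y) - sin ((\<mu> + 1/2) * y)"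
    by (simp add: sin_add algebra_simps)
  also have "\<dots> = Df N y * (2 * sin (y/2)) + (rf \<mu> y * (2 * sin (y/2))) * sin ((real N + 1/2) * y) + (qf \<mu> y * (2 * sin (y/2))) * cos ((real N + 1/2) * y) - gsf \<mu> y * (2 * sin (y/2))"
    using assms s by (simp add: Df_id rf_id qf_id gsf_id)
  also have "\<dots> = 2 * sin (y/2) * (Df N y + rf \<mu> y * sin ((real N + 1/2) * y) + qf \<mu> y * cos ((real N + 1/2) * y) - gsf \<mu> y)"
    by (simp add: algebra_simps)
  finally show ?thesis using s by simp
qed

lemma Ef_pi: "Ef N pi = pi / 2"
proof -
  have "sin ((real k + 1) * pi) = 0" for k
    using sin_npi[of "Suc k"] by (simp add: add.commute)
  then show ?thesis unfolding Ef_def by simp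
qed

lemma Ef_lim: assumes "0 < x" "x < 2 * pi" shows "(\<lambda>N. Ef N x) \<longlonglongrightarrow> pi / 2"
proof (cases "pi \<le> x")
  case True
  have "(\<lambda>N. Ef N x - Ef N pi) \<longlonglongrightarrow> 0" by (rule E_lim) (use True assms in auto)
  then have "(\<lambda>N. (Ef N x - Ef N pi) + pi/2) \<longlonglongrightarrow> 0 + pi/2" by (intro tendsto_intros)
  then show ?thesis by (simp add: Ef_pi)
next
  case False
  have "(\<lambda>N. Ef N pi - Ef N x) \<longlonglongrightarrow> 0" by (rule E_lim) (use False assms in auto)
  then have "(\<lambda>N. pi/2 - (Ef N pi - Ef N x)) \<longlonglongrightarrow> pi/2 - 0" by (intro tendsto_intros)
  then show ?thesis by (simp add: Ef_pi)
qed

lemma Ims_lim: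
  assumes mu: "\<mu> > -1" and x: "0 < x" "x < 2 * pi"
  shows "(\<lambda>N. Ims \<mu> N x) \<longlonglongrightarrow> pi / 2 - integral {0..x} (gsf \<mu>)"
proof -
  define I1 where "I1 N = integral {0..x} (\<lambda>y. rf \<mu> y * sin ((real N + 1/2) * y))" for N
  define I2 where "I2 N = integral {0..x} (\<lambda>y. qf \<mu> y * cos ((real N + 1/2) * y + 0))" for N
  define G where "G = integral {0..x} (gsf \<mu>)"
  have eq: "Ims \<mu> N x = Ef N x + I1 N + I2 N - G" for N
  proof -
    have h0: "((\<lambda>y. \<Sum>k<N. cos ((real k + 1 + \<mu>) * y)) has_integral (Ims \<mu> N x - Ims \<mu> N 0)) {0..x}"
      by (rule ftc_real[OF _ Ims_deriv[OF mu]]) (use x in auto)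
    then have h0: "((\<lambda>y. \<Sum>k<N. cos ((real k + 1 + \<mu>) * y)) has_integral (Ims \<mu> N x)) {0..x}"
      by (simp add: Ims_def)
    have h0': "((\<lambda>y. Df N y + rf \<mu> y * sin ((real N + 1/2) * y) + qf \<mu> y * cos ((real N + 1/2) * y + 0) - gsf \<mu> y) has_integral (Ims \<mu> N x)) {0..x}"
      by (rule has_integral_spike_finite[of "{0}", OF _ _ h0]) (use x in \<open>auto simp: cos_sum_decomp Ims_def\<close>)
    have h1: "(Df N has_integral Ef N x) {0..x}"
      using ftc_real[OF _ Ef_deriv, of 0 x N] x by (simp add: Ef_def)
    have h2: "((\<lambda>y. rf \<mu> y * sin ((real N + 1/2) * y)) has_integral I1 N) {0..x}"
      unfolding I1_def using cont_rf[of x \<mu>] x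
      by (intro integrable_integral integrable_continuous_interval) (auto intro!: continuous_intros)
    have h3: "((\<lambda>y. qf \<mu> y * cos ((real N + 1/2) * y + 0)) has_integral I2 N) {0..x}"
      unfolding I2_def using cont_qf[of x \<mu>] x
      by (intro integrable_integral integrable_continuous_interval) (auto intro!: continuous_intros)
    have h4: "(gsf \<mu> has_integral G) {0..x}"
      unfolding G_def using cont_gsf[of x \<mu>] x
      by (intro integrable_integral integrable_continuous_interval) auto
    have "((\<lambda>y. Df N y + rf \<mu> y * sin ((real N + 1/2) * y) + qf \<mu> y * cos ((real N + 1/2) * y + 0) - gsf \<mu> y) has_integral (Ef N x + I1 N + I2 N - G)) {0..x}"
      by (intro has_integral_diff has_integral_add h1 h2 h3 h4)
    then show ?thesis using h0' has_integral_unique by blast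
  qed
  have l1: "I1 \<longlonglongrightarrow> 0" unfolding I1_def by (rule RL_sin[OF cont_rf]) (use x in auto)
  have l2: "I2 \<longlonglongrightarrow> 0" unfolding I2_def by (rule RL[OF cont_qf]) (use x in auto)
  have "(\<lambda>N. Ef N x + I1 N + I2 N - G) \<longlonglongrightarrow> pi/2 + 0 + 0 - G"
    by (intro tendsto_intros Ef_lim l1 l2 x)
  then show ?thesis unfolding eq G_def by simp
qed

lemma sin_sum_decomp:
  assumes "0 < y" "y < 2 * pi"
  shows "(\<Sum>k<N. - sin ((real k + 1 + \<mu>) * y)) =
    cos (\<mu> * y) / (2 * sin (y/2)) * cos ((real N + 1/2) * y + 0)
    - sin (\<mu> * y) / (2 * sin (y/2)) * sin ((real N + 1/2) * y)
    - cos ((\<mu> + 1/2) * y) / (2 * sin (y/2))"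
proof -
  have s: "sin (y/2) > 0" using sin_half_pos assms by auto
  have "2 * sin (y/2) * (\<Sum>k<N. sin ((real k + 1 + \<mu>) * y)) = 2 * sin (y/2) * (\<Sum>k<N. sin ((real k + 1) * y + \<mu> * y))"
    by (simp add: algebra_simps)
  also have "\<dots> = cos (y/2 + \<mu> * y) - cos ((real N + 1/2) * y + \<mu> * y)" by (rule sum_sin_id)
  also have "\<dots> = cos ((\<mu> + 1/2) * y) - (cos (\<mu> * y) * cos ((real N + 1/2) * y) - sin (\<mu> * y) * sin ((real N + 1/2) * y))"
    by (simp add: cos_add algebra_simps)
  finally have e: "2 * sin (y/2) * (\<Sum>k<N. sin ((real k + 1 + \<mu>) * y)) = cos ((\<mu> + 1/2) * y) - (cos (\<mu> * y) * cos ((real N + 1/2) * y) - sin (\<mu> * y) * sin ((real N + 1/2) * y))" .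
  have "(\<Sum>k<N. - sin ((real k + 1 + \<mu>) * y)) = - (\<Sum>k<N. sin ((real k + 1 + \<mu>) * y))"
    by (simp add: sum_negf)
  also have "\<dots> = - (cos ((\<mu> + 1/2) * y) - (cos (\<mu> * y) * cos ((real N + 1/2) * y) - sin (\<mu> * y) * sin ((real N + 1/2) * y))) / (2 * sin (y/2))"
    using e s by (simp add: field_simps)
  also have "\<dots> = cos (\<mu> * y) / (2 * sin (y/2)) * cos ((real N + 1/2) * y + 0)
    - sin (\<mu> * y) / (2 * sin (y/2)) * sin ((real N + 1/2) * y)
    - cos ((\<mu> + 1/2) * y) / (2 * sin (y/2))"
    using s by (simp add: field_simps)
  finally show ?thesis .
qed

lemma Res_diff:
  assumes mu: "\<mu> > -1" and uv: "0 < u" "u \<le> v" "v < 2 * pi"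
  shows "(\<lambda>N. Res \<mu> N v - Res \<mu> N u) \<longlonglongrightarrow> - integral {u..v} (\<lambda>y. cos ((\<mu> + 1/2) * y) / (2 * sin (y/2)))"
proof -
  have pos: "y \<in> {u..v} \<Longrightarrow> sin (y/2) > 0" for y using sin_half_pos[of y] uv by auto
  define w1 where "w1 y = cos (\<mu> * y) / (2 * sin (y/2))" for y
  define w2 where "w2 y = sin (\<mu> * y) / (2 * sin (y/2))" for y
  define gc where "gc y = cos ((\<mu> + 1/2) * y) / (2 * sin (y/2))" for y
  have c1: "continuous_on {u..v} w1" unfolding w1_def[abs_def]
    using pos by (intro continuous_intros) force+
  have c2: "continuous_on {u..v} w2" unfolding w2_def[abs_def]
    using pos by (intro continuous_intros) force+
  have c3: "continuous_on {u..v} gc" unfolding gc_def[abs_def]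
    using pos by (intro continuous_intros) force+
  define I1 where "I1 N = integral {u..v} (\<lambda>y. w1 y * cos ((real N + 1/2) * y + 0))" for N
  define I2 where "I2 N = integral {u..v} (\<lambda>y. w2 y * sin ((real N + 1/2) * y))" for N
  define G where "G = integral {u..v} gc"
  have eq: "Res \<mu> N v - Res \<mu> N u = I1 N - I2 N - G" for N
  proof -
    have h0: "((\<lambda>y. \<Sum>k<N. - sin ((real k + 1 + \<mu>) * y)) has_integral (Res \<mu> N v - Res \<mu> N u)) {u..v}"
      by (rule ftc_real[OF uv(2) Res_deriv[OF mu]])
    have h0': "((\<lambda>y. w1 y * cos ((real N + 1/2) * y + 0) - w2 y * sin ((real N + 1/2) * y) - gc y) has_integral (Res \<mu> N v - Res \<mu> N u)) {u..v}"
      by (rule has_integral_spike_finite[of "{}", OF _ _ h0]) (use uv in \<open>auto simp: sin_sum_decomp w1_def w2_def gc_def\<close>)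
    have h1: "((\<lambda>y. w1 y * cos ((real N + 1/2) * y + 0)) has_integral I1 N) {u..v}"
      unfolding I1_def using c1
      by (intro integrable_integral integrable_continuous_interval) (auto intro!: continuous_intros)
    have h2: "((\<lambda>y. w2 y * sin ((real N + 1/2) * y)) has_integral I2 N) {u..v}"
      unfolding I2_def using c2
      by (intro integrable_integral integrable_continuous_interval) (auto intro!: continuous_intros)
    have h3: "(gc has_integral G) {u..v}"
      unfolding G_def using c3
      by (intro integrable_integral integrable_continuous_interval) auto
    have "((\<lambda>y. w1 y * cos ((real N + 1/2) * y + 0) - w2 y * sin ((real N + 1/2) * y) - gc y) has_integral (I1 N - I2 N - G)) {u..v}"
      by (intro has_integral_diff h1 h2 h3)
    then show ?thesis using h0' has_integral_unique by blast
  qed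
  have l1: "I1 \<longlonglongrightarrow> 0" unfolding I1_def by (rule RL[OF c1 uv(2)])
  have l2: "I2 \<longlonglongrightarrow> 0" unfolding I2_def by (rule RL_sin[OF c2 uv(2)])
  have "(\<lambda>N. I1 N - I2 N - G) \<longlonglongrightarrow> 0 - 0 - G"
    by (intro tendsto_intros l1 l2)
  then show ?thesis unfolding eq G_def gc_def by simp
qed

lemma alt_summable: assumes "\<mu> > -1"
  shows "summable (\<lambda>k. (-1)^k * (1 / (real k + 1 + \<mu>)))"
proof (rule summable_Leibniz(1))
  have "filterlim (\<lambda>k. real k + (1 + \<mu>)) at_top sequentially"
    using filterlim_tendsto_add_at_top[OF tendsto_const filterlim_real_sequentially, of "1 + \<mu>"]
    by (simp add: add.commute)
  then have "((\<lambda>k. 1 / (real k + (1 + \<mu>))) \<longlongrightarrow> 0) sequentially"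
    by (intro tendsto_divide_0[OF tendsto_const] filterlim_at_top_imp_at_infinity)
  then show "(\<lambda>k. 1 / (real k + 1 + \<mu>)) \<longlonglongrightarrow> 0" by (simp add: add.assoc)
  have "decseq (\<lambda>k. 1 / (real k + 1 + \<mu>))"
    by (rule decseq_SucI) (use assms in \<open>auto intro!: divide_left_mono\<close>)
  then show "monoseq (\<lambda>k. 1 / (real k + 1 + \<mu>))" by (rule decseq_imp_monoseq)
qed

lemma T_term: "cos (real (Suc k) * pi) / (real (Suc k) + \<mu>) = - ((-1)^k * (1 / (real k + 1 + \<mu>)))"
proof -
  have "cos (real (Suc k) * pi) = (-1)^(Suc k)" by (rule cos_npi)
  then show ?thesis by simp
qed

lemma FJ_T_pi: assumes "\<mu> > -1"
  shows "summable (\<lambda>k. cos (real (Suc k) * pi) / (real (Suc k) + \<mu>))"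
    and "FJ_T pi \<mu> = - (\<Sum>k. (-1)^k * (1 / (real k + 1 + \<mu>)))"
  unfolding T_term FJ_T_def using summable_minus[OF alt_summable[OF assms]] suminf_minus[OF alt_summable[OF assms]]
  by auto

lemma S_half: assumes "\<mu> > -1"
  shows "S_half_pi (2 * \<mu> + 1) = (\<Sum>k. (-1)^k * (1 / (real k + 1 + \<mu>)))"
proof -
  have "(\<lambda>k. (-1)^k / (2 * real k + 1 + (2 * \<mu> + 1))) = (\<lambda>k. (1/2) * ((-1)^k * (1 / (real k + 1 + \<mu>))))"
    by (rule ext) (simp add: field_simps)
  then show ?thesis unfolding S_half_pi_def using suminf_mult[OF alt_summable[OF assms], of "1/2"] by simp
qed

lemma cos_shift_pi: "cos ((real k + 1 + \<mu>) * pi) = cos (real (Suc k) * pi) * cos (pi * \<mu>)"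
proof -
  have "(real k + 1 + \<mu>) * pi = real (Suc k) * pi + pi * \<mu>" by (simp add: algebra_simps)
  then show ?thesis by (simp only: cos_add sin_npi)
qed

lemma Res_pi: assumes "\<mu> > -1"
  shows "(\<lambda>N. Res \<mu> N pi) \<longlonglongrightarrow> cos (pi * \<mu>) * FJ_T pi \<mu>"
proof -
  have "Res \<mu> N pi = cos (pi * \<mu>) * (\<Sum>k<N. cos (real (Suc k) * pi) / (real (Suc k) + \<mu>))" for N
    unfolding Res_def sum_distrib_left
  proof (rule sum.cong)
    fix k
    have e: "real (Suc k) + \<mu> = real k + 1 + \<mu>" by simp
    show "cos ((real k + 1 + \<mu>) * pi) / (real k + 1 + \<mu>) = cos (pi * \<mu>) * (cos (real (Suc k) * pi) / (real (Suc k) + \<mu>))"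
      by (simp only: cos_shift_pi e) (simp add: algebra_simps)
  qed simp
  moreover have "(\<lambda>N. \<Sum>k<N. cos (real (Suc k) * pi) / (real (Suc k) + \<mu>)) \<longlonglongrightarrow> FJ_T pi \<mu>"
    unfolding FJ_T_def by (rule summable_LIMSEQ[OF FJ_T_pi(1)[OF assms]])
  ultimately show ?thesis by (simp add: tendsto_mult_left)
qed

lemma exp_cis': "exp (\<i> * complex_of_real t) = cis t"
  by (simp add: cis_conv_exp)

lemma exp_term: "exp (\<i> * complex_of_real t) / complex_of_real c = Complex (cos t / c) (sin t / c)"
  unfolding exp_cis' by (simp add: complex_eq_iff Re_divide_of_real Im_divide_of_real)

lemma Re_exp_real: "Re (exp (\<i> * complex_of_real t) * complex_of_real c) = cos t * c"
  unfolding exp_cis' by simp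

theorem proposition7:
  fixes \<mu> x :: real
  assumes "\<mu> > -1" and "0 < x" and "x < 2 * pi"
  shows "(Im (exp (\<i> * of_real (x * \<mu>)) * FJ_L x \<mu>)
           + integral {0..x} (\<lambda>y. sin ((\<mu> + 1/2) * y) / (2 * sin (y / 2))) = pi / 2)
    \<and> (Re (exp (\<i> * of_real (x * \<mu>)) * FJ_L x \<mu>)
           - (if x \<le> pi then integral {x..pi} (\<lambda>y. cos ((\<mu> + 1/2) * y) / (2 * sin (y / 2)))
              else - integral {pi..x} (\<lambda>y. cos ((\<mu> + 1/2) * y) / (2 * sin (y / 2))))
         = Re (exp (\<i> * of_real (pi * \<mu>)) * of_real (FJ_T pi \<mu>)))
    \<and> (Re (exp (\<i> * of_real (pi * \<mu>)) * of_real (FJ_T pi \<mu>))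
         = - S_half_pi (2 * \<mu> + 1) * cos (pi * \<mu>))"
proof -
  note mu = assms(1) and x = assms(2,3)
  define ImL where "ImL = pi/2 - integral {0..x} (gsf \<mu>)"
  define RI where "RI = (if x \<le> pi then integral {x..pi} (\<lambda>y. cos ((\<mu> + 1/2) * y) / (2 * sin (y / 2)))
              else - integral {pi..x} (\<lambda>y. cos ((\<mu> + 1/2) * y) / (2 * sin (y / 2))))"
  define ReL where "ReL = cos (pi * \<mu>) * FJ_T pi \<mu> + RI"
  have limI: "(\<lambda>N. Ims \<mu> N x) \<longlonglongrightarrow> ImL" unfolding ImL_def by (rule Ims_lim[OF mu x])
  have limR: "(\<lambda>N. Res \<mu> N x) \<longlonglongrightarrow> ReL"
  proof (cases "x \<le> pi")
    case True
    have "(\<lambda>N. Res \<mu> N pi - Res \<mu> N x) \<longlonglongrightarrow> - integral {x..pi} (\<lambda>y. cos ((\<mu> + 1/2) * y) / (2 * sin (y/2)))"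
      by (rule Res_diff[OF mu]) (use True x in auto)
    from tendsto_diff[OF Res_pi[OF mu] this] show ?thesis
      unfolding ReL_def RI_def using True by simp
  next
    case False
    have "(\<lambda>N. Res \<mu> N x - Res \<mu> N pi) \<longlonglongrightarrow> - integral {pi..x} (\<lambda>y. cos ((\<mu> + 1/2) * y) / (2 * sin (y/2)))"
      by (rule Res_diff[OF mu]) (use False x in auto)
    from tendsto_add[OF Res_pi[OF mu] this] show ?thesis
      unfolding ReL_def RI_def using False by simp
  qed
  define z where "z = exp (\<i> * complex_of_real (x * \<mu>))"
  define P where "P N = (\<Sum>k<N. exp (\<i> * complex_of_real (real (Suc k) * x)) / complex_of_real (real (Suc k) + \<mu>))" for N
  have zP: "z * P N = Complex (Res \<mu> N x) (Ims \<mu> N x)" for N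
  proof -
    have "z * P N = (\<Sum>k<N. exp (\<i> * complex_of_real ((real k + 1 + \<mu>) * x)) / complex_of_real (real k + 1 + \<mu>))"
      unfolding z_def P_def sum_distrib_left
    proof (rule sum.cong)
      fix k
      have "exp (\<i> * complex_of_real (x * \<mu>)) * exp (\<i> * complex_of_real (real (Suc k) * x)) = exp (\<i> * complex_of_real ((real k + 1 + \<mu>) * x))"
        unfolding exp_add[symmetric] by (simp add: algebra_simps)
      then show "exp (\<i> * complex_of_real (x * \<mu>)) * (exp (\<i> * complex_of_real (real (Suc k) * x)) / complex_of_real (real (Suc k) + \<mu>)) =
          exp (\<i> * complex_of_real ((real k + 1 + \<mu>) * x)) / complex_of_real (real k + 1 + \<mu>)"
        by (simp add: add_ac)
    qed simp
    also have "\<dots> = Complex (Res \<mu> N x) (Ims \<mu> N x)"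
      unfolding exp_term Res_def Ims_def by (simp add: complex_eq_iff Re_sum Im_sum)
    finally show ?thesis .
  qed
  have z0: "z \<noteq> 0" unfolding z_def by simp
  have "(\<lambda>N. z * P N) \<longlonglongrightarrow> Complex ReL ImL" unfolding zP by (intro tendsto_Complex limR limI)
  then have "(\<lambda>N. inverse z * (z * P N)) \<longlonglongrightarrow> inverse z * Complex ReL ImL" by (intro tendsto_mult_left)
  then have "P \<longlonglongrightarrow> inverse z * Complex ReL ImL" using z0 by (simp add: field_simps)
  then have "(\<lambda>k. exp (\<i> * complex_of_real (real (Suc k) * x)) / complex_of_real (real (Suc k) + \<mu>)) sums (inverse z * Complex ReL ImL)"
    unfolding sums_def P_def[abs_def] .
  then have "FJ_L x \<mu> = inverse z * Complex ReL ImL" unfolding FJ_L_def by (rule sums_unique[symmetric])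
  then have zF: "exp (\<i> * complex_of_real (x * \<mu>)) * FJ_L x \<mu> = Complex ReL ImL"
    using z0 unfolding z_def[symmetric] by (simp add: field_simps)
  have int_eq: "integral {0..x} (\<lambda>y. sin ((\<mu> + 1/2) * y) / (2 * sin (y / 2))) = integral {0..x} (gsf \<mu>)"
  proof -
    have h: "(gsf \<mu> has_integral integral {0..x} (gsf \<mu>)) {0..x}"
      using cont_gsf[of x \<mu>] x by (intro integrable_integral integrable_continuous_interval) auto
    have "((\<lambda>y. sin ((\<mu> + 1/2) * y) / (2 * sin (y / 2))) has_integral integral {0..x} (gsf \<mu>)) {0..x}"
    proof (rule has_integral_spike_finite[of "{0}", OF _ _ h])
      fix y assume y: "y \<in> {0..x} - {0}"
      then have "sin (y/2) > 0" using sin_half_pos[of y] x by auto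
      then show "sin ((\<mu> + 1/2) * y) / (2 * sin (y / 2)) = gsf \<mu> y"
        using gsf_id[of y \<mu>] y x by (auto simp: field_simps)
    qed simp
    then show ?thesis by (rule integral_unique)
  qed
  have c1: "Im (exp (\<i> * of_real (x * \<mu>)) * FJ_L x \<mu>) + integral {0..x} (\<lambda>y. sin ((\<mu> + 1/2) * y) / (2 * sin (y / 2))) = pi / 2"
    unfolding zF int_eq ImL_def by simp
  have reT: "Re (exp (\<i> * of_real (pi * \<mu>)) * of_real (FJ_T pi \<mu>)) = cos (pi * \<mu>) * FJ_T pi \<mu>"
    by (rule Re_exp_real)
  have c2: "Re (exp (\<i> * of_real (x * \<mu>)) * FJ_L x \<mu>)
           - (if x \<le> pi then integral {x..pi} (\<lambda>y. cos ((\<mu> + 1/2) * y) / (2 * sin (y / 2)))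
              else - integral {pi..x} (\<lambda>y. cos ((\<mu> + 1/2) * y) / (2 * sin (y / 2))))
         = Re (exp (\<i> * of_real (pi * \<mu>)) * of_real (FJ_T pi \<mu>))"
    unfolding zF reT RI_def[symmetric] ReL_def by simp
  have c3: "Re (exp (\<i> * of_real (pi * \<mu>)) * of_real (FJ_T pi \<mu>)) = - S_half_pi (2 * \<mu> + 1) * cos (pi * \<mu>)"
    unfolding reT by (simp add: FJ_T_pi(2)[OF mu] S_half[OF mu])
  show ?thesis using c1 c2 c3 by blast
qed

end
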